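(* Let $0<s_{\min}<s_{\max}<\infty$ with $s_{\max}>2s_{\min}$, let $\alpha\in(0,1/2)$, and let $\varepsilon\in(1/2,1)$ be a constant. Then there does not exist a confidence set $C_n=C_n(Y)\subseteq\ell^2$ such that for every $0<b<B$ and $J_0\in\mathbb N$: $$\liminf_{n\to\infty}\ \inf_{f\in\bigcup_{s\in[s_{\min},s_{\max}]}S^s_\varepsilon(b,B,J_0)}\Pr_f(f\in C_n)\ge1-\alpha,$$ and for all $s\in[s_{\min},s_{\max}]$ and $\delta>0$ there exists $K>0$ with $$\limsup_{n\to\infty}\sup_{f\in S^s_\varepsilon(b,B,J_0)}\Pr_f\big(|C_n|>Kn^{-s/(2s+1)}\big)\le\delta,$$ where $|C_n|$ is the $\ell^2$-diameter of $C_n$.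
   Context: Gaussian sequence model: observations $Y=(y_k)_{k\in\mathbb N}$, $y_k=f_k+n^{-1/2}g_k$, $g_k$ i.i.d. $N(0,1)$, $f\in\ell^2$; $\Pr_f$ is the law of $Y$. Sobolev norm $\|f\|_{s,2}^2=\sum_k f_k^2k^{2s}$. Convention: $\sum_{k=a}^b$ for real $a,b$ means $\sum_{k=\lceil a\rceil}^{\lfloor b\rfloor}$. For $s>0$, $\varepsilon\in(0,1)$, $J_0\in\mathbb N$, $0<b<B$, and $c(s)=16\times2^{2s+1}$, $$S^s_\varepsilon(b,B,J_0)=\Big\{f\in\ell^2:\|f\|_{s,2}\in[b,B],\ \sum_{k=2^{J(1-\varepsilon)}}^{2^J}f_k^2\ge c(s)\|f\|_{s,2}^2 2^{-2Js}\ \forall J\in\mathbb N, J\ge J_0\Big\}.$$ *)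

theory Defs
  imports "HOL-Probability.Probability"
begin

text \<open>Indexing convention: the paper indexes sequences by k = 1,2,3,...
  An Isabelle sequence F :: nat => real represents (f_k) via f_k = F (k - 1),
  i.e. Isabelle coordinate i holds f_(i+1).\<close>

definition l2 :: "(nat \<Rightarrow> real) set" where
  "l2 = {F. summable (\<lambda>i. (F i)\<^sup>2)}"

definition l2_dist :: "(nat \<Rightarrow> real) \<Rightarrow> (nat \<Rightarrow> real) \<Rightarrow> real" where
  "l2_dist F G = sqrt (\<Sum>i. (F i - G i)\<^sup>2)"

text \<open>l2-diameter of a set (possibly infinite; -infinity for the empty set).\<close>
definition l2_diam :: "(nat \<Rightarrow> real) set \<Rightarrow> ereal" where
  "l2_diam C = (SUP F\<in>C. SUP G\<in>C. ereal (l2_dist F G))"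

definition sobolev_norm :: "real \<Rightarrow> (nat \<Rightarrow> real) \<Rightarrow> real" where
  "sobolev_norm s F = sqrt (\<Sum>i. (F i)\<^sup>2 * (real (i + 1)) powr (2 * s))"

definition c_const :: "real \<Rightarrow> real" where
  "c_const s = 16 * 2 powr (2 * s + 1)"

definition band_sum :: "(nat \<Rightarrow> real) \<Rightarrow> real \<Rightarrow> real \<Rightarrow> real" where
  "band_sum F a b = (\<Sum>k\<in>{k::nat. real_of_int \<lceil>a\<rceil> \<le> real k \<and> real k \<le> real_of_int \<lfloor>b\<rfloor> \<and> 1 \<le> k}. (F (k - 1))\<^sup>2)"

definition S_class :: "real \<Rightarrow> real \<Rightarrow> real \<Rightarrow> real \<Rightarrow> nat \<Rightarrow> (nat \<Rightarrow> real) set" where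
  "S_class s \<epsilon> b B J0 = {F \<in> l2.
      summable (\<lambda>i. (F i)\<^sup>2 * (real (i + 1)) powr (2 * s)) \<and>
      b \<le> sobolev_norm s F \<and> sobolev_norm s F \<le> B \<and>
      (\<forall>J::nat. J \<ge> J0 \<longrightarrow>
         band_sum F (2 powr (real J * (1 - \<epsilon>))) (2 powr real J)
           \<ge> c_const s * (sobolev_norm s F)\<^sup>2 * 2 powr (- 2 * real J * s))}"

text \<open>Law P_f of Y = (y_k), y_k = f_k + n^(-1/2) g_k, g_k iid N(0,1):
  infinite product of normal distributions with means f_k and sd n^(-1/2).\<close>
definition Pr :: "nat \<Rightarrow> (nat \<Rightarrow> real) \<Rightarrow> (nat \<Rightarrow> real) measure" where
  "Pr n F = (\<Pi>\<^sub>M i\<in>UNIV. density lborel (normal_density (F i) (1 / sqrt (real n))))"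

text \<open>Sample space measurable structure (same sigma-algebra as every Pr n F).\<close>
definition Ysp :: "(nat \<Rightarrow> real) measure" where
  "Ysp = (\<Pi>\<^sub>M i\<in>UNIV. (borel :: real measure))"

end

theory Submission
  imports Defs
begin


lemma (in product_prob_space) nn_integral_PiM_finite_prod:
  assumes F: "finite F" "F \<subseteq> I"
    and h: "\<And>i. i \<in> F \<Longrightarrow> h i \<in> borel_measurable (M i)"
  shows "(\<integral>\<^sup>+ y. (\<Prod>i\<in>F. h i (y i)) \<partial>PiM I M) = (\<Prod>i\<in>F. \<integral>\<^sup>+ x. h i x \<partial>M i)"
proof -
  have meas: "(\<lambda>y. \<Prod>i\<in>F. h i (y i)) \<in> borel_measurable (PiM F M)"
    using h by (intro borel_measurable_prod_ennreal) (auto intro: measurable_component_singleton[THEN measurable_compose])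
  have "(\<integral>\<^sup>+ y. (\<Prod>i\<in>F. h i (y i)) \<partial>PiM I M) = (\<integral>\<^sup>+ y. (\<Prod>i\<in>F. h i (restrict y F i)) \<partial>PiM I M)"
    by (intro nn_integral_cong prod.cong) auto
  also have "\<dots> = (\<integral>\<^sup>+ y. (\<Prod>i\<in>F. h i (y i)) \<partial>distr (PiM I M) (PiM F M) (\<lambda>x. restrict x F))"
    using F meas by (subst nn_integral_distr) (auto intro!: measurable_restrict_subset)
  also have "\<dots> = (\<integral>\<^sup>+ y. (\<Prod>i\<in>F. h i (y i)) \<partial>PiM F M)"
    using F by (simp add: distr_PiM_restrict_finite)
  also have "\<dots> = (\<Prod>i\<in>F. \<integral>\<^sup>+ x. h i x \<partial>M i)"
    using F h by (intro product_nn_integral_prod) auto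
  finally show ?thesis .
qed



lemma (in product_prob_space) PiM_density_finite:
  assumes F: "finite F" "F \<subseteq> I"
    and g: "\<And>i. i \<in> F \<Longrightarrow> g i \<in> borel_measurable (M i)"
    and g1: "\<And>i. i \<in> F \<Longrightarrow> (\<integral>\<^sup>+ x. g i x \<partial>M i) = 1"
  shows "PiM I (\<lambda>i. if i \<in> F then density (M i) (g i) else M i)
       = density (PiM I M) (\<lambda>y. \<Prod>i\<in>F. g i (y i))"
proof -
  define N where "N i = (if i \<in> F then density (M i) (g i) else M i)" for i
  have sN[simp]: "sets (N i) = sets (M i)" for i by (simp add: N_def)
  have spN[simp]: "space (N i) = space (M i)" for i by (simp add: N_def)
  have "prob_space (N i)" for i
  proof (cases "i \<in> F")
    case True
    have "emeasure (N i) (space (N i)) = (\<integral>\<^sup>+ x. g i x \<partial>M i)"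
      using True g unfolding N_def by (simp add: emeasure_density nn_integral_set_ennreal[symmetric])
    then show ?thesis using True g1 by (intro prob_spaceI) simp
  next
    case False then show ?thesis by (simp add: N_def M.prob_space_axioms)
  qed
  then interpret N: prob_space "N i" for i .
  interpret N: product_prob_space N I by unfold_locales
  have PiMN: "sets (PiM I N) = sets (PiM I M)"
    by (intro sets_PiM_cong) auto
  have meas: "(\<lambda>y. \<Prod>i\<in>F. g i (y i)) \<in> borel_measurable (PiM I M)"
    using g F by (intro borel_measurable_prod_ennreal) (auto intro: measurable_component_singleton[THEN measurable_compose])
  have "density (PiM I M) (\<lambda>y. \<Prod>i\<in>F. g i (y i)) = PiM I N"
  proof (rule N.PiM_eq)
    show "sets (density (PiM I M) (\<lambda>y. \<Prod>i\<in>F. g i (y i))) = sets (PiM I N)"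
      using PiMN by simp
  next
    fix J A assume J: "finite J" "J \<subseteq> I" and A: "\<And>j. j \<in> J \<Longrightarrow> A j \<in> sets (N j)"
    define h where "h i x = (if i \<in> J then indicator (A i) x else 1) * (if i \<in> F then g i x else 1)" for i x
    have hm: "h i \<in> borel_measurable (M i)" if "i \<in> J \<union> F" for i
      using A g that unfolding h_def by (cases "i\<in>J"; cases "i\<in>F") (auto intro!: borel_measurable_times_ennreal)
    have embeq: "prod_emb I N J (Pi\<^sub>E J A) = prod_emb I M J (Pi\<^sub>E J A)"
      unfolding prod_emb_iff set_eq_iff by simp
    have embm: "prod_emb I M J (Pi\<^sub>E J A) \<in> sets (PiM I M)"
      using J A by (intro measurable_prod_emb sets_PiM_I_finite) auto
    have "emeasure (density (PiM I M) (\<lambda>y. \<Prod>i\<in>F. g i (y i))) (prod_emb I N J (Pi\<^sub>E J A))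
        = (\<integral>\<^sup>+ y. (\<Prod>i\<in>F. g i (y i)) * indicator (prod_emb I M J (Pi\<^sub>E J A)) y \<partial>PiM I M)"
      by (subst embeq) (rule emeasure_density[OF meas embm])
    also have "\<dots> = (\<integral>\<^sup>+ y. (\<Prod>i\<in>J \<union> F. h i (y i)) \<partial>PiM I M)"
    proof (rule nn_integral_cong)
      fix y assume y: "y \<in> space (PiM I M)"
      have yiff: "y \<in> prod_emb I M J (Pi\<^sub>E J A) \<longleftrightarrow> (\<forall>i\<in>J. y i \<in> A i)"
        using y J unfolding prod_emb_iff space_PiM PiE_def Pi_def by auto
      have ind: "indicator (prod_emb I M J (Pi\<^sub>E J A)) y = (\<Prod>i\<in>J. indicator (A i) (y i) :: ennreal)"
      proof (cases "\<forall>i\<in>J. y i \<in> A i")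
        case True then show ?thesis using yiff by simp
      next
        case False
        then obtain i where "i \<in> J" "y i \<notin> A i" by blast
        moreover have "(\<Prod>i\<in>J. indicator (A i) (y i) :: ennreal) = 0"
          using calculation J by (intro prod_zero bexI[of _ i]) auto
        ultimately show ?thesis using yiff by auto
      qed
      have "(\<Prod>i\<in>J \<union> F. h i (y i)) = (\<Prod>i\<in>J \<union> F. (if i \<in> J then indicator (A i) (y i) else 1)) * (\<Prod>i\<in>J \<union> F. (if i \<in> F then g i (y i) else 1))"
        unfolding h_def by (rule prod.distrib)
      also have "(\<Prod>i\<in>J \<union> F. (if i \<in> J then indicator (A i) (y i) else 1)) = (\<Prod>i\<in>J. indicator (A i) (y i) :: ennreal)"
        using J F by (intro prod.mono_neutral_cong_right) auto
      also have "(\<Prod>i\<in>J \<union> F. (if i \<in> F then g i (y i) else 1)) = (\<Prod>i\<in>F. g i (y i))"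
        using J F by (intro prod.mono_neutral_cong_right) auto
      finally show "(\<Prod>i\<in>F. g i (y i)) * indicator (prod_emb I M J (Pi\<^sub>E J A)) y = (\<Prod>i\<in>J \<union> F. h i (y i))"
        using ind by (simp add: mult.commute)
    qed
    also have "\<dots> = (\<Prod>i\<in>J \<union> F. \<integral>\<^sup>+ x. h i x \<partial>M i)"
      using J F hm by (intro nn_integral_PiM_finite_prod) auto
    also have "\<dots> = (\<Prod>i\<in>J \<union> F. if i \<in> J then emeasure (N i) (A i) else 1)"
    proof (rule prod.cong[OF refl])
      fix i assume i: "i \<in> J \<union> F"
      show "(\<integral>\<^sup>+ x. h i x \<partial>M i) = (if i \<in> J then emeasure (N i) (A i) else 1)"
      proof (cases "i \<in> J")
        case True
        then have Ai: "A i \<in> sets (M i)" using A by auto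
        show ?thesis
        proof (cases "i \<in> F")
          case True
          then show ?thesis using \<open>i \<in> J\<close> Ai g
            by (simp add: h_def N_def emeasure_density mult.commute)
        next
          case False
          then show ?thesis using \<open>i \<in> J\<close> Ai
            by (simp add: h_def N_def)
        qed
      next
        case False
        then show ?thesis using i g1 by (simp add: h_def)
      qed
    qed
    also have "\<dots> = (\<Prod>j\<in>J. emeasure (N j) (A j))"
      using J F by (intro prod.mono_neutral_cong_right) auto
    finally show "emeasure (density (PiM I M) (\<lambda>y. \<Prod>i\<in>F. g i (y i))) (prod_emb I N J (Pi\<^sub>E J A)) = (\<Prod>j\<in>J. emeasure (N j) (A j))" .
  qed
  moreover have "N = (\<lambda>i. if i \<in> F then density (M i) (g i) else M i)"
    by (rule ext) (simp add: N_def)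
  ultimately show ?thesis by simp
qed



definition GG :: "real \<Rightarrow> real \<Rightarrow> real \<Rightarrow> real \<Rightarrow> real" where
  "GG \<sigma> a c y = exp ((c * (y - a) - c\<^sup>2 / 2) / \<sigma>\<^sup>2)"

lemma normal_density_shift:
  assumes "0 < \<sigma>"
  shows "normal_density (a + c) \<sigma> y = normal_density a \<sigma> y * GG \<sigma> a c y"
proof -
  have "-(y - (a + c))\<^sup>2 / (2 * \<sigma>\<^sup>2) = -(y - a)\<^sup>2 / (2 * \<sigma>\<^sup>2) + (c * (y - a) - c\<^sup>2 / 2) / \<sigma>\<^sup>2"
    using assms by (simp add: field_simps power2_eq_square)
  then have e: "exp (-(y - (a + c))\<^sup>2 / (2 * \<sigma>\<^sup>2)) = exp (-(y - a)\<^sup>2 / (2 * \<sigma>\<^sup>2)) * GG \<sigma> a c y"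
    unfolding GG_def exp_add[symmetric] by simp
  show ?thesis
    unfolding normal_density_def by (simp only: e mult.assoc)
qed

lemma integrable_normal_density':
  assumes "0 < \<sigma>"
  shows "integrable lborel (normal_density b \<sigma>)" "(\<integral>y. normal_density b \<sigma> y \<partial>lborel) = 1"
  using integrable_normal_moment[OF assms, of b 0] integral_normal_moment_even[OF assms, of b 0] by simp_all

lemma integrable_GG:
  assumes "0 < \<sigma>"
  shows "integrable lborel (\<lambda>y. normal_density a \<sigma> y * GG \<sigma> a c y)"
    "(\<integral>y. normal_density a \<sigma> y * GG \<sigma> a c y \<partial>lborel) = 1"
proof -
  have "(\<lambda>y. normal_density a \<sigma> y * GG \<sigma> a c y) = normal_density (a + c) \<sigma>"
    using normal_density_shift[OF assms] by auto
  then show "integrable lborel (\<lambda>y. normal_density a \<sigma> y * GG \<sigma> a c y)"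
    "(\<integral>y. normal_density a \<sigma> y * GG \<sigma> a c y \<partial>lborel) = 1"
    using integrable_normal_density'[OF assms] by simp_all
qed

lemma GG_pos: "0 < GG \<sigma> a c y" by (simp add: GG_def)

lemma GG_sq: "(GG \<sigma> a c y)\<^sup>2 = exp (c\<^sup>2 / \<sigma>\<^sup>2) * GG \<sigma> a (2 * c) y"
  unfolding GG_def power2_eq_square exp_add[symmetric]
  by (rule arg_cong[where f=exp]) (cases "\<sigma> = 0"; simp add: field_simps power2_eq_square)

lemma GG_neg: "GG \<sigma> a c y * GG \<sigma> a (- c) y = exp (- (c\<^sup>2 / \<sigma>\<^sup>2))"
  unfolding GG_def exp_add[symmetric]
  by (rule arg_cong[where f=exp]) (cases "\<sigma> = 0"; simp add: field_simps power2_eq_square)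

lemma nn_integral_GG:
  assumes "0 < \<sigma>"
  shows "(\<integral>\<^sup>+ y. ennreal (GG \<sigma> a c y) \<partial>density lborel (normal_density a \<sigma>)) = 1"
proof -
  have "(\<integral>\<^sup>+ y. ennreal (GG \<sigma> a c y) \<partial>density lborel (normal_density a \<sigma>))
      = (\<integral>\<^sup>+ y. ennreal (normal_density a \<sigma> y * GG \<sigma> a c y) \<partial>lborel)"
    by (subst nn_integral_density) (auto simp: GG_def ennreal_mult')
  also have "\<dots> = 1" using integrable_GG[OF assms, of a c]
    by (subst nn_integral_eq_integral) (auto simp: GG_def)
  finally show ?thesis .
qed

definition LL :: "real \<Rightarrow> real \<Rightarrow> real \<Rightarrow> real \<Rightarrow> real" where
  "LL \<sigma> a c y = (GG \<sigma> a c y + GG \<sigma> a (- c) y) / 2"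

lemma LL_pos: "0 < LL \<sigma> a c y" by (simp add: LL_def GG_pos add_pos_pos)

lemma LL_meas[measurable]: "LL \<sigma> a c \<in> borel_measurable borel"
  unfolding LL_def[abs_def] GG_def[abs_def] by simp

lemma nn_integral_LL:
  assumes "0 < \<sigma>"
  shows "(\<integral>\<^sup>+ y. ennreal (LL \<sigma> a c y) \<partial>density lborel (normal_density a \<sigma>)) = 1"
proof -
  have eq: "normal_density a \<sigma> y * LL \<sigma> a c y = (normal_density a \<sigma> y * GG \<sigma> a c y) / 2 + (normal_density a \<sigma> y * GG \<sigma> a (-c) y) / 2" for y
    unfolding LL_def by (simp add: field_simps)
  have int: "integrable lborel (\<lambda>y. normal_density a \<sigma> y * LL \<sigma> a c y)"
    unfolding eq using integrable_GG[OF assms] by auto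
  have val: "(\<integral>y. normal_density a \<sigma> y * LL \<sigma> a c y \<partial>lborel) = 1"
    unfolding eq using integrable_GG[OF assms] by simp
  have "(\<integral>\<^sup>+ y. ennreal (LL \<sigma> a c y) \<partial>density lborel (normal_density a \<sigma>))
      = (\<integral>\<^sup>+ y. ennreal (normal_density a \<sigma> y * LL \<sigma> a c y) \<partial>lborel)"
    by (subst nn_integral_density) (auto simp: ennreal_mult')
  also have "\<dots> = 1"
    using int val by (subst nn_integral_eq_integral) (auto intro!: mult_nonneg_nonneg less_imp_le[OF LL_pos])
  finally show ?thesis .
qed

lemma nn_integral_LL_sq:
  assumes "0 < \<sigma>"
  shows "(\<integral>\<^sup>+ y. ennreal ((LL \<sigma> a c y)\<^sup>2) \<partial>density lborel (normal_density a \<sigma>))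
     = ennreal ((exp (c\<^sup>2 / \<sigma>\<^sup>2) + exp (- (c\<^sup>2 / \<sigma>\<^sup>2))) / 2)"
proof -
  define x where "x = c\<^sup>2 / \<sigma>\<^sup>2"
  have eq: "normal_density a \<sigma> y * (LL \<sigma> a c y)\<^sup>2 =
     (exp x / 4) * (normal_density a \<sigma> y * GG \<sigma> a (2 * c) y) + (exp x / 4) * (normal_density a \<sigma> y * GG \<sigma> a (- (2 * c)) y)
     + (exp (-x) / 2) * normal_density a \<sigma> y" for y
  proof -
    have "(LL \<sigma> a c y)\<^sup>2 = ((GG \<sigma> a c y)\<^sup>2 + 2 * (GG \<sigma> a c y * GG \<sigma> a (- c) y) + (GG \<sigma> a (-c) y)\<^sup>2) / 4"
      unfolding LL_def by (simp add: power2_eq_square field_simps)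
    also have "\<dots> = (exp x * GG \<sigma> a (2 * c) y + 2 * exp (-x) + exp x * GG \<sigma> a (- (2 * c)) y) / 4"
      unfolding GG_sq GG_neg x_def by simp
    finally show ?thesis
      by (simp add: field_simps)
  qed
  have int: "integrable lborel (\<lambda>y. normal_density a \<sigma> y * (LL \<sigma> a c y)\<^sup>2)"
    unfolding eq using integrable_normal_density'(1)[OF assms] integrable_GG(1)[OF assms] by auto
  have val: "(\<integral>y. normal_density a \<sigma> y * (LL \<sigma> a c y)\<^sup>2 \<partial>lborel) = (exp x + exp (-x)) / 2"
    unfolding eq using integrable_normal_density'[OF assms] integrable_GG[OF assms]
    by (simp add: field_simps)
  have "(\<integral>\<^sup>+ y. ennreal ((LL \<sigma> a c y)\<^sup>2) \<partial>density lborel (normal_density a \<sigma>))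
      = (\<integral>\<^sup>+ y. ennreal (normal_density a \<sigma> y * (LL \<sigma> a c y)\<^sup>2) \<partial>lborel)"
    by (subst nn_integral_density) (auto simp: ennreal_mult')
  also have "\<dots> = ennreal ((exp x + exp (-x)) / 2)"
    using int val by (subst nn_integral_eq_integral) auto
  finally show ?thesis by (simp add: x_def)
qed



lemma GG_meas[measurable]: "GG \<sigma> a c \<in> borel_measurable borel"
  unfolding GG_def[abs_def] by simp

definition PP :: "real \<Rightarrow> (nat \<Rightarrow> real) \<Rightarrow> (nat \<Rightarrow> real) measure" where
  "PP \<sigma> f = (\<Pi>\<^sub>M i\<in>UNIV. density lborel (normal_density (f i) \<sigma>))"

lemma Pr_PP: "Pr n F = PP (1 / sqrt (real n)) F"
  by (simp add: Pr_def PP_def)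

lemma prob_space_PP: "0 < \<sigma> \<Longrightarrow> prob_space (PP \<sigma> f)"
  unfolding PP_def by (intro prob_space_PiM prob_space_normal_density)

lemma sets_PP: "sets (PP \<sigma> f) = sets Ysp"
  unfolding PP_def Ysp_def by (intro sets_PiM_cong) auto

lemma space_PP: "space (PP \<sigma> f) = space Ysp"
  unfolding PP_def Ysp_def space_PiM by simp

definition pert :: "(nat \<Rightarrow> real) \<Rightarrow> nat set \<Rightarrow> real \<Rightarrow> (nat \<Rightarrow> real) \<Rightarrow> (nat \<Rightarrow> real)" where
  "pert f0 Fs \<rho> \<theta> = (\<lambda>i. f0 i + (if i \<in> Fs then \<theta> i * \<rho> else 0))"

lemma PP_pert_density:
  assumes \<sigma>: "0 < \<sigma>" and Fs: "finite Fs" and \<theta>: "\<And>i. i \<in> Fs \<Longrightarrow> \<theta> i \<in> {-1, 1}"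
  shows "PP \<sigma> (pert f0 Fs \<rho> \<theta>) = density (PP \<sigma> f0) (\<lambda>y. \<Prod>i\<in>Fs. ennreal (GG \<sigma> (f0 i) (\<theta> i * \<rho>) (y i)))"
proof -
  define M where "M i = density lborel (normal_density (f0 i) \<sigma>)" for i
  interpret M: prob_space "M i" for i unfolding M_def using \<sigma> by (rule prob_space_normal_density)
  interpret product_prob_space M UNIV by unfold_locales
  have "PP \<sigma> (pert f0 Fs \<rho> \<theta>) = PiM UNIV (\<lambda>i. if i \<in> Fs then density (M i) (\<lambda>x. ennreal (GG \<sigma> (f0 i) (\<theta> i * \<rho>) x)) else M i)"
    unfolding PP_def
  proof (intro PiM_cong refl)
    fix i show "density lborel (normal_density (pert f0 Fs \<rho> \<theta> i) \<sigma>) = (if i \<in> Fs then density (M i) (\<lambda>x. ennreal (GG \<sigma> (f0 i) (\<theta> i * \<rho>) x)) else M i)"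
    proof (cases "i \<in> Fs")
      case True
      have "density (M i) (\<lambda>x. ennreal (GG \<sigma> (f0 i) (\<theta> i * \<rho>) x))
          = density lborel (\<lambda>x. ennreal (normal_density (f0 i) \<sigma> x) * ennreal (GG \<sigma> (f0 i) (\<theta> i * \<rho>) x))"
        unfolding M_def by (rule density_density_eq) (auto simp: GG_def)
      also have "\<dots> = density lborel (normal_density (pert f0 Fs \<rho> \<theta> i) \<sigma>)"
        using True \<sigma> by (intro density_cong) (auto simp: pert_def normal_density_shift ennreal_mult')
      finally show ?thesis using True by simp
    next
      case False then show ?thesis by (simp add: pert_def M_def)
    qed
  qed
  also have "\<dots> = density (PiM UNIV M) (\<lambda>y. \<Prod>i\<in>Fs. ennreal (GG \<sigma> (f0 i) (\<theta> i * \<rho>) (y i)))"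
    using Fs \<sigma> by (intro PiM_density_finite) (auto simp: M_def nn_integral_GG)
  moreover have "M = (\<lambda>i. density lborel (normal_density (f0 i) \<sigma>))"
    by (rule ext) (simp add: M_def)
  ultimately show ?thesis by (simp add: PP_def)
qed



lemma mixture_bound:
  fixes \<sigma> \<rho> lam :: real and Fs :: "nat set" and f0 :: "nat \<Rightarrow> real"
  assumes \<sigma>: "0 < \<sigma>" and Fs: "finite Fs" and E: "E \<in> sets Ysp" and lam: "0 < lam"
  defines "ch \<equiv> (exp (\<rho>\<^sup>2 / \<sigma>\<^sup>2) + exp (- (\<rho>\<^sup>2 / \<sigma>\<^sup>2))) / 2"
  shows "measure (PP \<sigma> f0) E \<le>
    (\<Sum>\<theta>\<in>PiE Fs (\<lambda>_. {-1, 1}). measure (PP \<sigma> (pert f0 Fs \<rho> \<theta>)) E) / 2 ^ card Fs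
      + lam / 2 + (ch ^ card Fs - 1) / (2 * lam)"
proof -
  define M where "M i = density lborel (normal_density (f0 i) \<sigma>)" for i
  interpret M: prob_space "M i" for i unfolding M_def using \<sigma> by (rule prob_space_normal_density)
  interpret product_prob_space M UNIV by unfold_locales
  have P0: "PP \<sigma> f0 = PiM UNIV M"
  proof -
    have "M = (\<lambda>i. density lborel (normal_density (f0 i) \<sigma>))" by (rule ext) (simp add: M_def)
    then show ?thesis by (simp add: PP_def)
  qed
  have EP: "E \<in> sets (PiM UNIV M)" using E sets_PP[of \<sigma> f0] P0 by simp
  define m where "m = card Fs"
  define Lr where "Lr y = (\<Prod>i\<in>Fs. LL \<sigma> (f0 i) \<rho> (y i))" for y :: "nat \<Rightarrow> real"
  have Lr_pos: "0 < Lr y" for y unfolding Lr_def by (intro prod_pos LL_pos)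
  have Lr_meas[measurable]: "Lr \<in> borel_measurable (PiM UNIV M)"
    unfolding Lr_def by (intro borel_measurable_prod) (auto intro: measurable_component_singleton[THEN measurable_compose] simp: M_def)
  have LLm: "(\<lambda>x. ennreal (LL \<sigma> (f0 i) \<rho> x)) \<in> borel_measurable (M i)" for i by (simp add: M_def)
  have LL2m: "(\<lambda>x. ennreal ((LL \<sigma> (f0 i) \<rho> x)\<^sup>2)) \<in> borel_measurable (M i)" for i by (simp add: M_def)
  have nn1: "(\<integral>\<^sup>+ y. ennreal (Lr y) \<partial>PiM UNIV M) = ennreal 1"
  proof -
    have "(\<integral>\<^sup>+ y. ennreal (Lr y) \<partial>PiM UNIV M) = (\<integral>\<^sup>+ y. (\<Prod>i\<in>Fs. ennreal (LL \<sigma> (f0 i) \<rho> (y i))) \<partial>PiM UNIV M)"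
      unfolding Lr_def by (intro nn_integral_cong) (simp add: prod_ennreal less_imp_le[OF LL_pos])
    also have "\<dots> = (\<Prod>i\<in>Fs. \<integral>\<^sup>+ x. ennreal (LL \<sigma> (f0 i) \<rho> x) \<partial>M i)"
      using Fs LLm by (intro nn_integral_PiM_finite_prod) auto
    also have "\<dots> = 1" using \<sigma> by (simp add: M_def nn_integral_LL)
    finally show ?thesis by simp
  qed
  have nn2: "(\<integral>\<^sup>+ y. ennreal ((Lr y)\<^sup>2) \<partial>PiM UNIV M) = ennreal (ch ^ m)"
  proof -
    have "(\<integral>\<^sup>+ y. ennreal ((Lr y)\<^sup>2) \<partial>PiM UNIV M) = (\<integral>\<^sup>+ y. (\<Prod>i\<in>Fs. ennreal ((LL \<sigma> (f0 i) \<rho> (y i))\<^sup>2)) \<partial>PiM UNIV M)"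
      unfolding Lr_def by (intro nn_integral_cong) (simp add: prod_ennreal prod_power_distrib)
    also have "\<dots> = (\<Prod>i\<in>Fs. \<integral>\<^sup>+ x. ennreal ((LL \<sigma> (f0 i) \<rho> x)\<^sup>2) \<partial>M i)"
      using Fs LL2m by (intro nn_integral_PiM_finite_prod) auto
    also have "\<dots> = (\<Prod>i\<in>Fs. ennreal ch)" using \<sigma> by (simp add: M_def nn_integral_LL_sq ch_def)
    also have "\<dots> = ennreal (ch ^ m)"
      by (simp add: m_def ennreal_power ch_def)
    finally show ?thesis .
  qed
  have int1: "integrable (PiM UNIV M) Lr"
    using nn1 by (intro integrableI_nn_integral_finite[where x=1]) (auto intro: less_imp_le[OF Lr_pos])
  have int2: "integrable (PiM UNIV M) (\<lambda>y. (Lr y)\<^sup>2)"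
    using nn2 by (intro integrableI_nn_integral_finite[where x="ch^m"]) auto
  have I1: "(\<integral>y. Lr y \<partial>PiM UNIV M) = 1"
    using nn1 by (subst integral_eq_nn_integral) (auto intro: less_imp_le[OF Lr_pos])
  have chpos: "0 \<le> ch" unfolding ch_def by (intro divide_nonneg_pos add_nonneg_nonneg) auto
  have I2: "(\<integral>y. (Lr y)\<^sup>2 \<partial>PiM UNIV M) = ch ^ m"
    using nn2 chpos by (subst integral_eq_nn_integral) auto
  have intE: "integrable (PiM UNIV M) (\<lambda>y. Lr y * indicator E y)"
    using integrable_mult_indicator[OF EP int1] by (simp add: mult.commute)
  define \<Theta> where "\<Theta> = PiE Fs (\<lambda>_. {-1::real, 1})"
  have fin\<Theta>: "finite \<Theta>" unfolding \<Theta>_def using Fs by (intro finite_PiE) auto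
  have card\<Theta>: "card \<Theta> = 2 ^ m" unfolding \<Theta>_def m_def using Fs by (simp add: card_PiE numeral_2_eq_2)
  have mix: "(\<Sum>\<theta>\<in>\<Theta>. measure (PP \<sigma> (pert f0 Fs \<rho> \<theta>)) E) = 2 ^ m * (\<integral>y. Lr y * indicator E y \<partial>PiM UNIV M)"
  proof -
    define g where "g \<theta> y = (\<Prod>i\<in>Fs. ennreal (GG \<sigma> (f0 i) (\<theta> i * \<rho>) (y i)))" for \<theta> and y :: "nat \<Rightarrow> real"
    have gm: "g \<theta> \<in> borel_measurable (PiM UNIV M)" for \<theta>
      unfolding g_def by (intro borel_measurable_prod_ennreal) (auto intro: measurable_component_singleton[THEN measurable_compose] simp: M_def)
    have em: "emeasure (PP \<sigma> (pert f0 Fs \<rho> \<theta>)) E = (\<integral>\<^sup>+ y. g \<theta> y * indicator E y \<partial>PiM UNIV M)" if "\<theta> \<in> \<Theta>" for \<theta>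
    proof -
      have "\<And>i. i \<in> Fs \<Longrightarrow> \<theta> i \<in> {-1, 1}" using that by (auto simp: \<Theta>_def)
      then have "PP \<sigma> (pert f0 Fs \<rho> \<theta>) = density (PiM UNIV M) (g \<theta>)"
        using PP_pert_density[OF \<sigma> Fs, of \<theta> f0 \<rho>] P0 by (simp add: g_def[abs_def])
      then show ?thesis using gm EP by (simp add: emeasure_density)
    qed
    have emPP: "emeasure (PP \<sigma> f) E = ennreal (measure (PP \<sigma> f) E)" for f
    proof -
      interpret prob_space "PP \<sigma> f" using \<sigma> by (rule prob_space_PP)
      show ?thesis by (rule emeasure_eq_measure)
    qed
    have sumg: "(\<Sum>\<theta>\<in>\<Theta>. g \<theta> y) = ennreal (2 ^ m * Lr y)" for y
    proof -
      have "(\<Sum>\<theta>\<in>\<Theta>. g \<theta> y) = (\<Prod>i\<in>Fs. \<Sum>t\<in>{-1::real, 1}. ennreal (GG \<sigma> (f0 i) (t * \<rho>) (y i)))"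
        unfolding g_def \<Theta>_def using Fs by (subst prod_sum_PiE) auto
      also have "\<dots> = (\<Prod>i\<in>Fs. ennreal (2 * LL \<sigma> (f0 i) \<rho> (y i)))"
      proof (intro prod.cong refl)
        fix i
        have "(\<Sum>t\<in>{-1::real, 1}. ennreal (GG \<sigma> (f0 i) (t * \<rho>) (y i))) = ennreal (GG \<sigma> (f0 i) (- \<rho>) (y i)) + ennreal (GG \<sigma> (f0 i) \<rho> (y i))"
          by simp
        also have "\<dots> = ennreal (2 * LL \<sigma> (f0 i) \<rho> (y i))"
          by (simp add: LL_def ennreal_plus[symmetric] less_imp_le[OF GG_pos] del: ennreal_plus)
        finally show "(\<Sum>t\<in>{-1::real, 1}. ennreal (GG \<sigma> (f0 i) (t * \<rho>) (y i))) = ennreal (2 * LL \<sigma> (f0 i) \<rho> (y i))" .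
      qed
      also have "\<dots> = ennreal (\<Prod>i\<in>Fs. 2 * LL \<sigma> (f0 i) \<rho> (y i))"
        by (rule prod_ennreal) (simp add: less_imp_le[OF LL_pos])
      also have "(\<Prod>i\<in>Fs. 2 * LL \<sigma> (f0 i) \<rho> (y i)) = 2 ^ m * Lr y"
        by (simp add: prod.distrib Lr_def m_def)
      finally show ?thesis .
    qed
    have "ennreal (\<Sum>\<theta>\<in>\<Theta>. measure (PP \<sigma> (pert f0 Fs \<rho> \<theta>)) E) = (\<Sum>\<theta>\<in>\<Theta>. emeasure (PP \<sigma> (pert f0 Fs \<rho> \<theta>)) E)"
      by (simp add: emPP sum_ennreal[symmetric] del: sum_ennreal)
    also have "\<dots> = (\<Sum>\<theta>\<in>\<Theta>. \<integral>\<^sup>+ y. g \<theta> y * indicator E y \<partial>PiM UNIV M)"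
      by (intro sum.cong refl em)
    also have "\<dots> = (\<integral>\<^sup>+ y. (\<Sum>\<theta>\<in>\<Theta>. g \<theta> y * indicator E y) \<partial>PiM UNIV M)"
      using gm EP by (subst nn_integral_sum) auto
    also have "\<dots> = (\<integral>\<^sup>+ y. ennreal (2 ^ m * (Lr y * indicator E y)) \<partial>PiM UNIV M)"
      by (intro nn_integral_cong) (simp add: sum_distrib_right[symmetric] sumg ennreal_mult'[symmetric] mult.assoc split: split_indicator)
    also have "\<dots> = ennreal (\<integral>y. 2 ^ m * (Lr y * indicator E y) \<partial>PiM UNIV M)"
      using intE by (intro nn_integral_eq_integral) (auto intro!: mult_nonneg_nonneg less_imp_le[OF Lr_pos])
    also have "\<dots> = ennreal (2 ^ m * (\<integral>y. Lr y * indicator E y \<partial>PiM UNIV M))"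
      by simp
    finally show ?thesis
      by (rule ennreal_inj[THEN iffD1, rotated 2]) (auto intro!: sum_nonneg mult_nonneg_nonneg integral_nonneg_AE less_imp_le[OF Lr_pos])
  qed
  have pw: "indicator E y \<le> Lr y * indicator E y + lam / 2 + ((Lr y)\<^sup>2 - 2 * Lr y + 1) / (2 * lam)" for y
  proof -
    have "(1 - Lr y - lam) ^ 2 \<ge> 0" by simp
    then have "1 - Lr y \<le> lam / 2 + ((Lr y)\<^sup>2 - 2 * Lr y + 1) / (2 * lam)"
      using lam by (simp add: field_simps power2_eq_square)
    moreover have "0 \<le> lam / 2 + ((Lr y)\<^sup>2 - 2 * Lr y + 1) / (2 * lam)"
    proof -
      have "(Lr y)\<^sup>2 - 2 * Lr y + 1 = (Lr y - 1)\<^sup>2" by (simp add: power2_eq_square algebra_simps)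
      then show ?thesis using lam by simp
    qed
    ultimately show ?thesis by (cases "y \<in> E") auto
  qed
  have intI: "integrable (PiM UNIV M) (indicator E :: _ \<Rightarrow> real)"
    by (rule integrable_real_indicator[OF EP]) (simp add: infinity_ennreal_def less_top[symmetric] P.emeasure_finite)
  have "measure (PiM UNIV M) E = (\<integral>y. indicator E y \<partial>PiM UNIV M)"
    using EP by simp
  also have "\<dots> \<le> (\<integral>y. Lr y * indicator E y + lam / 2 + ((Lr y)\<^sup>2 - 2 * Lr y + 1) / (2 * lam) \<partial>PiM UNIV M)"
    using EP intE int1 int2 pw intI by (intro integral_mono) auto
  also have "\<dots> = (\<integral>y. Lr y * indicator E y \<partial>PiM UNIV M) + lam / 2 + (ch ^ m - 2 * 1 + 1) / (2 * lam)"
    using intE int1 int2 I1 I2 by (simp add: integral_add integral_diff integral_divide_zero P.prob_space)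
  finally have "measure (PiM UNIV M) E \<le> (\<integral>y. Lr y * indicator E y \<partial>PiM UNIV M) + lam / 2 + (ch ^ m - 1) / (2 * lam)"
    by simp
  then show ?thesis
    using mix by (simp add: P0 \<Theta>_def m_def)
qed



definition f0 :: "real \<Rightarrow> nat \<Rightarrow> real" where
  "f0 t i = (if (\<exists>j::nat. i + 1 = 2 ^ j) then real (i + 1) powr (- t) else 0)"

lemma f0_pow: "f0 t (2 ^ j - 1) = 2 powr (- t * real j)"
proof -
  have "(2::nat) ^ j - 1 + 1 = 2 ^ j" by simp
  then have "f0 t (2 ^ j - 1) = real ((2::nat) ^ j) powr (- t)" unfolding f0_def by (metis)
  also have "\<dots> = 2 powr (- t * real j)"
    by (simp add: powr_realpow[symmetric] powr_powr mult.commute)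
  finally show ?thesis .
qed

lemma f0_sums:
  assumes "s < t"
  shows "(\<lambda>i. (f0 t i)\<^sup>2 * real (i + 1) powr (2 * s)) sums (1 / (1 - 2 powr (2 * (s - t))))"
proof -
  define g where "g j = (2::nat) ^ j - 1" for j
  have sm: "strict_mono g" unfolding g_def strict_mono_def
  proof (intro allI impI)
    fix x y :: nat assume "x < y"
    then have "(2::nat) ^ x < 2 ^ y" by simp
    moreover have "1 \<le> (2::nat) ^ x" by simp
    ultimately show "(2::nat) ^ x - 1 < 2 ^ y - 1" by linarith
  qed
  have zero: "(f0 t i)\<^sup>2 * real (i + 1) powr (2 * s) = 0" if "i \<notin> range g" for i
  proof -
    have "\<not> (\<exists>j. i + 1 = 2 ^ j)"
    proof
      assume "\<exists>j. i + 1 = 2 ^ j"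
      then obtain j where "i + 1 = 2 ^ j" by blast
      then have "i = g j" unfolding g_def by simp
      then show False using that by auto
    qed
    then show ?thesis by (simp add: f0_def)
  qed
  have eq: "(f0 t (g j))\<^sup>2 * real (g j + 1) powr (2 * s) = (2 powr (2 * (s - t))) ^ j" for j
  proof -
    have g1: "real (g j + 1) = 2 powr real j" unfolding g_def by (simp add: powr_realpow)
    have a: "(f0 t (g j))\<^sup>2 = 2 powr (- 2 * t * real j)"
      unfolding g_def f0_pow power2_eq_square powr_add[symmetric] by (simp add: mult.assoc)
    have b: "real (g j + 1) powr (2 * s) = 2 powr (2 * s * real j)"
      unfolding g1 powr_powr by (simp add: mult.commute)
    have c: "(2 powr (2 * (s - t))) ^ j = 2 powr (2 * (s - t) * real j)"
      by (simp add: powr_realpow[symmetric] powr_powr)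
    show ?thesis unfolding a b c powr_add[symmetric] by (simp add: algebra_simps)
  qed
  have "2 powr (2 * (s - t)) < 2 powr 0" using assms by (intro powr_less_mono) auto
  then have lt: "norm (2 powr (2 * (s - t))) < 1" by simp
  have "(\<lambda>j. (f0 t (g j))\<^sup>2 * real (g j + 1) powr (2 * s)) sums (1 / (1 - 2 powr (2 * (s - t))))"
    unfolding eq using geometric_sums[OF lt] by (simp add: divide_inverse)
  then show ?thesis using sums_mono_reindex[OF sm, of "\<lambda>i. (f0 t i)\<^sup>2 * real (i + 1) powr (2 * s)"] zero by blast
qed



lemma band_lower:
  fixes F :: "nat \<Rightarrow> real" and J :: nat
  assumes FF: "\<And>j. F (2 ^ j - 1) = 2 powr (- t * real j)" and \<epsilon>: "0 < \<epsilon>" "\<epsilon> < 1" and t: "0 < t"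
  shows "band_sum F (2 powr (real J * (1 - \<epsilon>))) (2 powr real J) \<ge> 2 powr (- 2 * t * (real J * (1 - \<epsilon>) + 1))"
proof -
  define x where "x = real J * (1 - \<epsilon>)"
  define j where "j = nat \<lceil>x\<rceil>"
  have x0: "0 \<le> x" using \<epsilon> by (simp add: x_def)
  have xJ: "x \<le> real J" using \<epsilon> by (simp add: x_def mult_left_le)
  have jx: "x \<le> real j" unfolding j_def using x0 by linarith
  have jx1: "real j \<le> x + 1" unfolding j_def using x0 by linarith
  have jJ: "j \<le> J" unfolding j_def using xJ by (simp add: nat_le_iff ceiling_le_iff)
  define S where "S = {k::nat. real_of_int \<lceil>2 powr x\<rceil> \<le> real k \<and> real k \<le> real_of_int \<lfloor>2 powr real J\<rfloor> \<and> 1 \<le> k}"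
  have fl: "\<lfloor>2 powr real J\<rfloor> = int (2 ^ J)" by (simp add: powr_realpow)
  have finS: "finite S"
  proof (rule finite_subset)
    show "S \<subseteq> {..2 ^ J}" unfolding S_def fl by auto
  qed simp
  have kS: "2 ^ j \<in> S"
  proof -
    have "2 powr x \<le> 2 powr real j" using jx by simp
    then have "2 powr x \<le> real ((2::nat) ^ j)" by (simp add: powr_realpow)
    then have "\<lceil>2 powr x\<rceil> \<le> int (2 ^ j)" by (simp add: ceiling_le_iff)
    moreover have "(2::nat) ^ j \<le> 2 ^ J" using jJ by (simp add: power_increasing)
    ultimately show ?thesis unfolding S_def fl by simp
  qed
  have "band_sum F (2 powr x) (2 powr real J) = (\<Sum>k\<in>S. (F (k - 1))\<^sup>2)"
    unfolding band_sum_def S_def ..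
  also have "\<dots> \<ge> (F (2 ^ j - 1))\<^sup>2"
    using finS kS by (intro member_le_sum) auto
  finally have "band_sum F (2 powr x) (2 powr real J) \<ge> (F (2 ^ j - 1))\<^sup>2" .
  moreover have "(F (2 ^ j - 1))\<^sup>2 = 2 powr (- 2 * t * real j)"
    unfolding FF power2_eq_square powr_add[symmetric] by (simp add: mult.assoc)
  moreover have "2 powr (- 2 * t * (x + 1)) \<le> 2 powr (- 2 * t * real j)"
    using jx1 t by (intro powr_mono) auto
  ultimately show ?thesis unfolding x_def by linarith
qed



lemma c_const_pos: "0 < c_const s" by (simp add: c_const_def)

lemma mem_S:
  fixes F :: "nat \<Rightarrow> real"
  assumes FF: "\<And>j. F (2 ^ j - 1) = 2 powr (- t * real j)" and \<epsilon>: "0 < \<epsilon>" "\<epsilon> < 1" and t: "0 < t"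
    and s: "0 < s"
    and sums: "(\<lambda>i. (F i)\<^sup>2 * real (i + 1) powr (2 * s)) sums Sv" and Sv: "1 \<le> Sv" "Sv \<le> Q"
    and b: "0 < b" "b \<le> 1" and B: "sqrt Q \<le> B"
    and band: "\<And>J. J \<ge> J0 \<Longrightarrow> c_const s * Q * 2 powr (- 2 * real J * s) \<le> 2 powr (- 2 * t * (real J * (1 - \<epsilon>) + 1))"
  shows "F \<in> S_class s \<epsilon> b B J0"
proof -
  have summ: "summable (\<lambda>i. (F i)\<^sup>2 * real (i + 1) powr (2 * s))" using sums by (rule sums_summable)
  have "summable (\<lambda>i. (F i)\<^sup>2)"
  proof (rule summable_comparison_test[OF _ summ], intro exI allI impI)
    fix i :: nat
    have "1 \<le> real (i + 1) powr (2 * s)" using s by (intro ge_one_powr_ge_zero) auto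
    then show "norm ((F i)\<^sup>2) \<le> (F i)\<^sup>2 * real (i + 1) powr (2 * s)"
      by (simp add: mult_le_cancel_left1)
  qed
  then have l2: "F \<in> l2" unfolding l2_def by simp
  have sn: "sobolev_norm s F = sqrt Sv" unfolding sobolev_norm_def using sums by (simp add: sums_unique[symmetric])
  have sn2: "(sobolev_norm s F)\<^sup>2 = Sv" using Sv by (simp add: sn)
  have lo: "b \<le> sobolev_norm s F" using b Sv by (simp add: sn order_trans[OF _ real_sqrt_ge_one])
  have hi: "sobolev_norm s F \<le> B" using Sv B by (simp add: sn order_trans[OF real_sqrt_le_mono])
  have bd: "band_sum F (2 powr (real J * (1 - \<epsilon>))) (2 powr real J) \<ge> c_const s * (sobolev_norm s F)\<^sup>2 * 2 powr (- 2 * real J * s)"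
    if "J \<ge> J0" for J
  proof -
    have "c_const s * (sobolev_norm s F)\<^sup>2 * 2 powr (- 2 * real J * s) \<le> c_const s * Q * 2 powr (- 2 * real J * s)"
      unfolding sn2 using Sv c_const_pos[of s] by (intro mult_right_mono mult_left_mono) auto
    also have "\<dots> \<le> 2 powr (- 2 * t * (real J * (1 - \<epsilon>) + 1))" using band that .
    also have "\<dots> \<le> band_sum F (2 powr (real J * (1 - \<epsilon>))) (2 powr real J)"
      using band_lower[OF FF \<epsilon> t] .
    finally show ?thesis .
  qed
  show ?thesis unfolding S_class_def using l2 summ lo hi bd by auto
qed



definition blk :: "nat \<Rightarrow> nat set" where "blk p = {2 ^ p ..< 2 ^ Suc p - 1}"

lemma blk_not_pow:
  assumes "i \<in> blk p" shows "i + 1 \<noteq> 2 ^ j"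
proof
  assume eq: "i + 1 = 2 ^ j"
  from assms have "2 ^ p < i + 1" "i + 1 < 2 ^ Suc p" unfolding blk_def by auto
  then have "(2::nat) ^ p < 2 ^ j" "(2::nat) ^ j < 2 ^ Suc p" using eq by auto
  then have "p < j" "j < Suc p" by (meson nat_power_less_imp_less pos2)+
  then show False by simp
qed

lemma f0_blk: "i \<in> blk p \<Longrightarrow> f0 t i = 0"
  using blk_not_pow unfolding f0_def by metis

lemma pow_not_blk: "2 ^ j - 1 \<notin> blk p"
proof
  assume "2 ^ j - 1 \<in> blk p"
  from blk_not_pow[OF this, of j] show False by simp
qed

lemma finite_blk: "finite (blk p)" by (simp add: blk_def)

lemma card_blk: "card (blk p) = 2 ^ p - 1" by (simp add: blk_def)

lemma pert_pow: "pert (f0 t) (blk p) \<rho> \<theta> (2 ^ j - 1) = 2 powr (- t * real j)"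
proof -
  have "pert (f0 t) (blk p) \<rho> \<theta> (2 ^ j - 1) = f0 t (2 ^ j - 1)"
    using pow_not_blk[of j p] unfolding pert_def by simp
  then show ?thesis using f0_pow[of t j] by simp
qed

lemma pert_sums:
  assumes \<theta>: "\<And>i. i \<in> blk p \<Longrightarrow> \<theta> i \<in> {-1, 1}" and s: "s < t"
  shows "(\<lambda>i. (pert (f0 t) (blk p) \<rho> \<theta> i)\<^sup>2 * real (i + 1) powr (2 * s)) sums
     (1 / (1 - 2 powr (2 * (s - t))) + (\<Sum>i\<in>blk p. \<rho>\<^sup>2 * real (i + 1) powr (2 * s)))"
proof -
  have eq: "(pert (f0 t) (blk p) \<rho> \<theta> i)\<^sup>2 * real (i + 1) powr (2 * s) =
     (f0 t i)\<^sup>2 * real (i + 1) powr (2 * s) + (if i \<in> blk p then \<rho>\<^sup>2 * real (i + 1) powr (2 * s) else 0)" for i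
  proof (cases "i \<in> blk p")
    case True
    then have "(\<theta> i)\<^sup>2 = 1" using \<theta>[OF True] by (auto simp: power2_eq_square)
    then show ?thesis using True f0_blk[OF True] by (simp add: pert_def power_mult_distrib)
  next
    case False then show ?thesis by (simp add: pert_def)
  qed
  show ?thesis unfolding eq
    by (intro sums_add f0_sums s sums_If_finite_set finite_blk)
qed

lemma blk_weight:
  assumes s: "0 < s"
  shows "(\<Sum>i\<in>blk p. 2 powr (- (real p * (2 * s + 1) + 2 * s)) * real (i + 1) powr (2 * s)) \<le> 1"
proof -
  define r where "r = 2 powr (- (real p * (2 * s + 1) + 2 * s))"
  have r0: "0 \<le> r" by (simp add: r_def)
  have "(\<Sum>i\<in>blk p. r * real (i + 1) powr (2 * s)) \<le> (\<Sum>i\<in>blk p. r * 2 powr (2 * s * (real p + 1)))"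
  proof (intro sum_mono mult_left_mono r0)
    fix i assume "i \<in> blk p"
    then have "i + 1 \<le> 2 ^ Suc p" unfolding blk_def by auto
    then have "real (i + 1) \<le> 2 ^ Suc p" by (metis of_nat_le_iff of_nat_numeral of_nat_power)
    moreover have "(2::real) powr (real p + 1) = 2 ^ Suc p" using powr_realpow[of 2 "Suc p"] by (simp add: add.commute)
    ultimately have "real (i + 1) \<le> 2 powr (real p + 1)" by simp
    then have "real (i + 1) powr (2 * s) \<le> (2 powr (real p + 1)) powr (2 * s)"
      using s by (intro powr_mono2) auto
    then show "real (i + 1) powr (2 * s) \<le> 2 powr (2 * s * (real p + 1))"
      by (simp add: powr_powr mult.commute)
  qed
  also have "\<dots> = real (2 ^ p - 1) * (r * 2 powr (2 * s * (real p + 1)))"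
    by (simp add: card_blk)
  also have "\<dots> \<le> 2 powr real p * (r * 2 powr (2 * s * (real p + 1)))"
    using r0 by (intro mult_right_mono) (auto simp: powr_realpow)
  also have "\<dots> = 1"
    unfolding r_def powr_add[symmetric] by (simp add: algebra_simps)
  finally show ?thesis by (simp add: r_def)
qed

lemma l2_dist_pert:
  assumes \<theta>: "\<And>i. i \<in> Fs \<Longrightarrow> \<theta> i \<in> {-1, 1}" and Fs: "finite Fs"
  shows "l2_dist f (pert f Fs \<rho> \<theta>) = sqrt (real (card Fs) * \<rho>\<^sup>2)"
proof -
  have eq: "(f i - pert f Fs \<rho> \<theta> i)\<^sup>2 = (if i \<in> Fs then \<rho>\<^sup>2 else 0)" for i
  proof (cases "i \<in> Fs")
    case True
    then have "(\<theta> i)\<^sup>2 = 1" using \<theta>[OF True] by (auto simp: power2_eq_square)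
    then show ?thesis using True by (simp add: pert_def power_mult_distrib)
  qed (simp add: pert_def)
  have "(\<lambda>i. (f i - pert f Fs \<rho> \<theta> i)\<^sup>2) sums (\<Sum>i\<in>Fs. \<rho>\<^sup>2)"
    unfolding eq by (rule sums_If_finite_set[OF Fs])
  then show ?thesis unfolding l2_dist_def by (simp add: sums_unique[symmetric])
qed



lemma cosh_pow_bound:
  fixes x u :: real and m :: nat
  assumes x: "0 \<le> x" and mu: "real m * x\<^sup>2 \<le> u" and u1: "u \<le> 1"
  shows "((exp x + exp (- x)) / 2) ^ m \<le> 1 + 2 * u"
proof (cases "m = 0")
  case True
  have "0 \<le> real m * x\<^sup>2" by simp
  then show ?thesis using True mu by simp
next
  case False
  then have "x\<^sup>2 \<le> real m * x\<^sup>2" by (simp add: mult_le_cancel_right1)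
  then have x21: "x\<^sup>2 \<le> 1" using mu u1 by linarith
  then have x1: "x \<le> 1" using x by (simp add: power_le_one_iff abs_le_square_iff)
  have e1: "exp x \<le> 1 + x + x\<^sup>2" using exp_bound[OF x x1] .
  have "1 + x \<le> exp x" by (rule exp_ge_add_one_self)
  then have "exp (- x) \<le> 1 / (1 + x)" using x by (simp add: exp_minus field_simps)
  also have "\<dots> \<le> 1 - x + x\<^sup>2"
  proof -
    have "1 \<le> (1 - x + x\<^sup>2) * (1 + x)" using x by (simp add: algebra_simps power2_eq_square power3_eq_cube)
    then show ?thesis using x by (simp add: field_simps)
  qed
  finally have e2: "exp (- x) \<le> 1 - x + x\<^sup>2" .
  have ch: "(exp x + exp (- x)) / 2 \<le> 1 + x\<^sup>2" using e1 e2 by simp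
  have ch0: "0 \<le> (exp x + exp (- x)) / 2" by (simp add: add_nonneg_nonneg)
  have "((exp x + exp (- x)) / 2) ^ m \<le> (1 + x\<^sup>2) ^ m" using ch ch0 by (rule power_mono)
  also have "\<dots> \<le> (exp (x\<^sup>2)) ^ m" by (intro power_mono) (auto simp: add.commute exp_ge_add_one_self)
  also have "\<dots> = exp (real m * x\<^sup>2)" by (simp add: exp_of_nat_mult[symmetric])
  also have "\<dots> \<le> 1 + real m * x\<^sup>2 + (real m * x\<^sup>2)\<^sup>2" using mu u1 by (intro exp_bound) auto
  also have "\<dots> \<le> 1 + 2 * u"
  proof -
    have "0 \<le> real m * x\<^sup>2" by simp
    moreover have "real m * x\<^sup>2 \<le> 1" using mu u1 by linarith
    ultimately have "(real m * x\<^sup>2)\<^sup>2 \<le> real m * x\<^sup>2" unfolding power2_eq_square[of "real m * x\<^sup>2"] by (rule mult_left_le[rotated])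
    then show ?thesis using mu by linarith
  qed
  finally show ?thesis .
qed



lemma asy_choice:
  fixes s1 s2 K \<gamma> :: real and N :: nat
  assumes s1: "0 < s1" and s2: "2 * s1 < s2" and K: "0 < K" and \<gamma>: "0 < \<gamma>"
  shows "\<exists>q p. q \<ge> N \<and> p \<ge> 1 \<and>
     K * real ((2::nat) ^ q) powr (- s2 / (2 * s2 + 1)) <
        sqrt (real (2 ^ p - 1) * 2 powr (- (real p * (2 * s1 + 1) + 2 * s1))) \<and>
     real (2 ^ p - 1) * (real ((2::nat) ^ q) * 2 powr (- (real p * (2 * s1 + 1) + 2 * s1)))\<^sup>2 \<le> \<gamma>"
proof -
  define a where "a = 4 * s1 + 1"
  define A where "A = \<bar>log 2 \<gamma>\<bar>"
  define w where "w = s2 / (2 * s2 + 1) - 2 * s1 / a"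
  define R where "R = s1 * A / a + 2 * s1 + 1 / 2 + \<bar>log 2 K\<bar>"
  define q where "q = max N (nat \<lceil>R / w\<rceil> + 1)"
  define p where "p = nat \<lceil>(2 * real q + A) / a\<rceil>"
  define r where "r = 2 powr (- (real p * (2 * s1 + 1) + 2 * s1))"
  have a0: "0 < a" using s1 by (simp add: a_def)
  have A0: "0 \<le> A" by (simp add: A_def)
  have w0: "0 < w"
  proof -
    have "2 * s1 * (2 * s2 + 1) < s2 * a" using s1 s2 by (simp add: a_def algebra_simps)
    then have "2 * s1 / a < s2 / (2 * s2 + 1)" using a0 s1 s2 by (simp add: field_simps)
    then show ?thesis by (simp add: w_def)
  qed
  have R0: "0 \<le> R" using s1 A0 a0 by (simp add: R_def)
  have q1: "q \<ge> 1" by (simp add: q_def)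
  have qN: "q \<ge> N" by (simp add: q_def)
  have qR: "R < real q * w"
  proof -
    have "R / w \<le> real (nat \<lceil>R / w\<rceil>)" by linarith
    also have "\<dots> < real q" by (simp add: q_def)
    finally show ?thesis using w0 by (simp add: field_simps)
  qed
  have pos: "0 < (2 * real q + A) / a" using q1 A0 a0 by simp
  have p_ge: "(2 * real q + A) / a \<le> real p" unfolding p_def by linarith
  have p_le: "real p \<le> (2 * real q + A) / a + 1" unfolding p_def using pos by linarith
  have p1: "p \<ge> 1" unfolding p_def using pos by linarith
  have r0: "0 < r" by (simp add: r_def)
  have c2: "real (2 ^ p - 1) * (real ((2::nat) ^ q) * r)\<^sup>2 \<le> \<gamma>"
  proof -
    have i1: "real (2 ^ p - 1) \<le> 2 powr real p" by (simp add: powr_realpow)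
    have e: "real ((2::nat) ^ q) = 2 powr real q" by (simp add: powr_realpow)
    have "real (2 ^ p - 1) * (real ((2::nat) ^ q) * r)\<^sup>2 \<le> 2 powr real p * (2 powr real q * r)\<^sup>2"
      unfolding e using i1 by (rule mult_right_mono) simp
    also have "\<dots> = 2 powr (2 * real q - real p * a - 4 * s1)"
      unfolding r_def power2_eq_square powr_add[symmetric] by (simp add: a_def algebra_simps)
    also have "\<dots> \<le> 2 powr (- A)"
    proof (intro powr_mono)
      have "2 * real q + A \<le> real p * a" using p_ge a0 by (simp add: field_simps)
      then show "2 * real q - real p * a - 4 * s1 \<le> - A" using s1 by linarith
    qed simp
    also have "\<dots> \<le> 2 powr (log 2 \<gamma>)" by (intro powr_mono) (auto simp: A_def)
    also have "\<dots> = \<gamma>" using \<gamma> by simp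
    finally show ?thesis .
  qed
  have c1: "K * real ((2::nat) ^ q) powr (- s2 / (2 * s2 + 1)) < sqrt (real (2 ^ p - 1) * r)"
  proof -
    have "K * real ((2::nat) ^ q) powr (- s2 / (2 * s2 + 1)) = 2 powr (log 2 K - real q * s2 / (2 * s2 + 1))"
    proof -
      have "real ((2::nat) ^ q) powr (- s2 / (2 * s2 + 1)) = 2 powr (- real q * s2 / (2 * s2 + 1))"
        by (simp add: powr_realpow[symmetric] powr_powr)
      then show ?thesis using K by (simp add: powr_diff powr_minus divide_inverse)
    qed
    also have "\<dots> < 2 powr (- (s1 * real p + s1 + 1 / 2))"
    proof (intro powr_less_mono)
      have "s1 * real p \<le> s1 * ((2 * real q + A) / a + 1)" using p_le s1 by (intro mult_left_mono) auto
      also have "\<dots> = real q * (2 * s1 / a) + s1 * A / a + s1" using a0 by (simp add: field_simps)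
      finally have "s1 * real p \<le> real q * (2 * s1 / a) + s1 * A / a + s1" .
      moreover have "log 2 K \<le> \<bar>log 2 K\<bar>" by simp
      ultimately show "log 2 K - real q * s2 / (2 * s2 + 1) < - (s1 * real p + s1 + 1 / 2)"
        using qR unfolding R_def w_def by (simp add: algebra_simps)
    qed simp
    also have "\<dots> = sqrt (2 powr (real p - 1) * r)"
    proof -
      have "2 powr (real p - 1) * r = 2 powr (- (2 * s1 * real p + 2 * s1 + 1))"
        unfolding r_def powr_add[symmetric] by (simp add: algebra_simps)
      then have "sqrt (2 powr (real p - 1) * r) = (2 powr (- (2 * s1 * real p + 2 * s1 + 1))) powr (1/2)"
        by (simp add: powr_half_sqrt)
      also have "\<dots> = 2 powr (- (2 * s1 * real p + 2 * s1 + 1) * (1/2))" by (simp only: powr_powr)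
      also have "\<dots> = 2 powr (- (s1 * real p + s1 + 1 / 2))"
        by (rule arg_cong[where f="\<lambda>x. 2 powr x"]) (simp add: field_simps)
      finally show ?thesis by simp
    qed
    also have "\<dots> \<le> sqrt (real (2 ^ p - 1) * r)"
    proof -
      have "(2::real) powr (real p - 1) = 2 ^ (p - 1)" using p1 by (simp add: powr_realpow[symmetric] of_nat_diff)
      also have "\<dots> \<le> real (2 ^ p - 1)"
      proof -
        have "(2::nat) ^ p = 2 * 2 ^ (p - 1)" using p1 by (metis Suc_diff_le diff_Suc_1 power_Suc)
        moreover have "(1::nat) \<le> 2 ^ (p - 1)" by simp
        ultimately have "2 ^ (p - 1) \<le> (2::nat) ^ p - 1" by linarith
        then show ?thesis by (metis of_nat_le_iff of_nat_numeral of_nat_power)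
      qed
      finally show ?thesis using r0 by (intro real_sqrt_le_mono mult_right_mono) auto
    qed
    finally show ?thesis .
  qed
  show ?thesis using c1 c2 qN p1 unfolding r_def by blast
qed



lemma J0_exists:
  fixes s t \<epsilon> Cst :: real
  assumes d: "0 < s - t * (1 - \<epsilon>)" and C: "0 < Cst"
  shows "\<exists>J0::nat. J0 \<ge> 1 \<and> (\<forall>J. J \<ge> J0 \<longrightarrow> Cst * 2 powr (- 2 * real J * s) \<le> 2 powr (- 2 * t * (real J * (1 - \<epsilon>) + 1)))"
proof -
  define d' where "d' = s - t * (1 - \<epsilon>)"
  define J0 where "J0 = nat \<lceil>(log 2 Cst + 2 * t) / (2 * d')\<rceil> + 1"
  have "\<forall>J. J \<ge> J0 \<longrightarrow> Cst * 2 powr (- 2 * real J * s) \<le> 2 powr (- 2 * t * (real J * (1 - \<epsilon>) + 1))"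
  proof (intro allI impI)
    fix J assume J: "J \<ge> J0"
    have "(log 2 Cst + 2 * t) / (2 * d') \<le> real J" using J unfolding J0_def by linarith
    then have "log 2 Cst + 2 * t \<le> real J * (2 * d')" using d by (simp add: d'_def field_simps)
    then have ex: "log 2 Cst - 2 * real J * s \<le> - 2 * t * (real J * (1 - \<epsilon>) + 1)"
      by (simp add: d'_def algebra_simps)
    have "Cst * 2 powr (- 2 * real J * s) = 2 powr (log 2 Cst - 2 * real J * s)"
      using C by (simp add: powr_diff powr_minus divide_inverse)
    also have "\<dots> \<le> 2 powr (- 2 * t * (real J * (1 - \<epsilon>) + 1))" using ex by simp
    finally show "Cst * 2 powr (- 2 * real J * s) \<le> 2 powr (- 2 * t * (real J * (1 - \<epsilon>) + 1))" .
  qed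
  then show ?thesis by (intro exI[of _ J0]) (simp add: J0_def)
qed



theorem corollary1:
  fixes s_min s_max \<alpha> \<epsilon> :: real
  assumes "0 < s_min" "s_min < s_max" "s_max > 2 * s_min"
    and "0 < \<alpha>" "\<alpha> < 1/2"
    and "1/2 < \<epsilon>" "\<epsilon> < 1"
  shows "\<not> (\<exists>C :: nat \<Rightarrow> (nat \<Rightarrow> real) \<Rightarrow> (nat \<Rightarrow> real) set.
     (\<forall>n Y. C n Y \<subseteq> l2) \<and>
     (\<forall>n F. {Y \<in> space Ysp. F \<in> C n Y} \<in> sets Ysp) \<and>
     (\<forall>n (t::ereal). {Y \<in> space Ysp. l2_diam (C n Y) > t} \<in> sets Ysp) \<and>
     (\<forall>b B J0. 0 < b \<longrightarrow> b < B \<longrightarrow> 1 \<le> J0 \<longrightarrow>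
        liminf (\<lambda>n. INF F\<in>(\<Union>s\<in>{s_min..s_max}. S_class s \<epsilon> b B J0).
            ereal (measure (Pr n F) {Y \<in> space (Pr n F). F \<in> C n Y}))
          \<ge> ereal (1 - \<alpha>) \<and>
        (\<forall>s\<in>{s_min..s_max}. \<forall>\<delta>>0. \<exists>K>0.
           limsup (\<lambda>n. SUP F\<in>S_class s \<epsilon> b B J0.
             ereal (measure (Pr n F)
               {Y \<in> space (Pr n F). l2_diam (C n Y) > ereal (K * real n powr (- s / (2 * s + 1)))}))
           \<le> ereal \<delta>)))"
proof
  assume "\<exists>C :: nat \<Rightarrow> (nat \<Rightarrow> real) \<Rightarrow> (nat \<Rightarrow> real) set.
     (\<forall>n Y. C n Y \<subseteq> l2) \<and>
     (\<forall>n F. {Y \<in> space Ysp. F \<in> C n Y} \<in> sets Ysp) \<and>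
     (\<forall>n (t::ereal). {Y \<in> space Ysp. l2_diam (C n Y) > t} \<in> sets Ysp) \<and>
     (\<forall>b B J0. 0 < b \<longrightarrow> b < B \<longrightarrow> 1 \<le> J0 \<longrightarrow>
        liminf (\<lambda>n. INF F\<in>(\<Union>s\<in>{s_min..s_max}. S_class s \<epsilon> b B J0).
            ereal (measure (Pr n F) {Y \<in> space (Pr n F). F \<in> C n Y}))
          \<ge> ereal (1 - \<alpha>) \<and>
        (\<forall>s\<in>{s_min..s_max}. \<forall>\<delta>>0. \<exists>K>0.
           limsup (\<lambda>n. SUP F\<in>S_class s \<epsilon> b B J0.
             ereal (measure (Pr n F)
               {Y \<in> space (Pr n F). l2_diam (C n Y) > ereal (K * real n powr (- s / (2 * s + 1)))}))
           \<le> ereal \<delta>))"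
  then obtain C :: "nat \<Rightarrow> (nat \<Rightarrow> real) \<Rightarrow> (nat \<Rightarrow> real) set" where
    Cm1: "\<And>n F. {Y \<in> space Ysp. F \<in> C n Y} \<in> sets Ysp" and
    Cm2: "\<And>n (t::ereal). {Y \<in> space Ysp. l2_diam (C n Y) > t} \<in> sets Ysp" and
    H: "\<And>b B J0. 0 < b \<Longrightarrow> b < B \<Longrightarrow> 1 \<le> J0 \<Longrightarrow>
        liminf (\<lambda>n. INF F\<in>(\<Union>s\<in>{s_min..s_max}. S_class s \<epsilon> b B J0).
            ereal (measure (Pr n F) {Y \<in> space (Pr n F). F \<in> C n Y}))
          \<ge> ereal (1 - \<alpha>) \<and>
        (\<forall>s\<in>{s_min..s_max}. \<forall>\<delta>>0. \<exists>K>0.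
           limsup (\<lambda>n. SUP F\<in>S_class s \<epsilon> b B J0.
             ereal (measure (Pr n F)
               {Y \<in> space (Pr n F). l2_diam (C n Y) > ereal (K * real n powr (- s / (2 * s + 1)))}))
           \<le> ereal \<delta>)"
    by blast
  define s1 where "s1 = s_min"
  define v where "v = 1 / (1 - \<epsilon>)"
  define s2 where "s2 = min s_max (s1 * (2 + v) / 2)"
  define t where "t = (s2 + s1 * v) / 2"
  have s1pos: "0 < s1" using assms by (simp add: s1_def)
  have e1: "2 < v" using assms by (simp add: field_simps v_def)
  have v1: "v * (1 - \<epsilon>) = 1" using assms by (simp add: v_def)
  have s2gt: "2 * s1 < s2"
  proof -
    have "s1 * 2 < s1 * v" using s1pos e1 by simp
    then have "2 * s1 < s1 * (2 + v) / 2" by (simp add: field_simps)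
    then show ?thesis using assms by (simp add: s2_def s1_def)
  qed
  have s2le: "s2 \<le> s_max" by (simp add: s2_def)
  have s2lt: "s2 < s1 * v"
  proof -
    have "s1 * 2 < s1 * v" using s1pos e1 by simp
    then have "s1 * (2 + v) / 2 < s1 * v" by (simp add: field_simps)
    then show ?thesis by (simp add: s2_def)
  qed
  have s2t: "s2 < t" using s2lt by (simp add: t_def)
  have ts1: "t < s1 * v" using s2lt by (simp add: t_def)
  have s1t: "s1 < t" using s2gt s1pos s2t by linarith
  have tpos: "0 < t" using s1pos s1t by linarith
  have s2pos: "0 < s2" using s2gt s1pos by linarith
  have eps: "0 < \<epsilon>" "\<epsilon> < 1" using assms by auto
  have d1: "0 < s1 - t * (1 - \<epsilon>)"
  proof -
    have "t * (1 - \<epsilon>) < s1 * v * (1 - \<epsilon>)" using ts1 eps by (intro mult_strict_right_mono) auto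
    also have "\<dots> = s1" using v1 by (simp add: mult.assoc)
    finally show ?thesis by simp
  qed
  have d2: "0 < s2 - t * (1 - \<epsilon>)" using d1 s2gt s1pos by linarith
  have s1rng: "s1 \<in> {s_min..s_max}" using assms by (simp add: s1_def)
  have s2rng: "s2 \<in> {s_min..s_max}" using s2le s2gt s1pos by (simp add: s1_def)
  define N1 where "N1 = 1 / (1 - 2 powr (2 * (s1 - t)))"
  define N2 where "N2 = 1 / (1 - 2 powr (2 * (s2 - t)))"
  have N_ge: "1 \<le> 1 / (1 - 2 powr (2 * (s - t)))" if "s < t" for s
  proof -
    have "2 powr (2 * (s - t)) < 2 powr 0" using that by (intro powr_less_mono) auto
    then have "2 powr (2 * (s - t)) < 1" by simp
    moreover have "0 < 2 powr (2 * (s - t))" by simp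
    ultimately show ?thesis by (simp add: field_simps)
  qed
  have N1: "1 \<le> N1" unfolding N1_def using N_ge[OF s1t] .
  have N2: "1 \<le> N2" unfolding N2_def using N_ge[OF s2t] .
  define Q where "Q = N1 + N2 + 1"
  define b :: real where "b = 1/2"
  define B where "B = Q + 1"
  have Qge: "1 \<le> Q" using N1 N2 by (simp add: Q_def)
  have sqQ: "sqrt Q \<le> B"
  proof -
    have q1: "1 \<le> sqrt Q" using Qge by simp
    then have "sqrt Q * 1 \<le> sqrt Q * sqrt Q" by (intro mult_left_mono) auto
    then have "sqrt Q \<le> Q" using Qge by simp
    then show ?thesis by (simp add: B_def)
  qed
  have bB: "0 < b" "b < B" "b \<le> 1" using Qge by (simp_all add: b_def B_def)
  obtain Ja where Ja: "Ja \<ge> 1" "\<And>J. J \<ge> Ja \<Longrightarrow> c_const s1 * Q * 2 powr (- 2 * real J * s1) \<le> 2 powr (- 2 * t * (real J * (1 - \<epsilon>) + 1))"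
    using J0_exists[OF d1, of "c_const s1 * Q"] c_const_pos[of s1] Qge by auto
  obtain Jb where Jb: "Jb \<ge> 1" "\<And>J. J \<ge> Jb \<Longrightarrow> c_const s2 * Q * 2 powr (- 2 * real J * s2) \<le> 2 powr (- 2 * t * (real J * (1 - \<epsilon>) + 1))"
    using J0_exists[OF d2, of "c_const s2 * Q"] c_const_pos[of s2] Qge by auto
  define J0 where "J0 = max Ja Jb"
  have J0: "1 \<le> J0" using Ja by (simp add: J0_def)
  have f0S2: "f0 t \<in> S_class s2 \<epsilon> b B J0"
  proof (rule mem_S[OF f0_pow eps tpos s2pos f0_sums[OF s2t] N2[unfolded N2_def] _ bB(1) bB(3) sqQ])
    have "N2 \<le> Q" using N1 by (simp add: Q_def)
    then show "1 / (1 - 2 powr (2 * (s2 - t))) \<le> Q" by (simp only: N2_def)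
  next
    fix J assume "J0 \<le> J"
    then show "c_const s2 * Q * 2 powr (- 2 * real J * s2) \<le> 2 powr (- 2 * t * (real J * (1 - \<epsilon>) + 1))"
      by (intro Jb(2)) (simp add: J0_def)
  qed
  define U where "U = (\<Union>s\<in>{s_min..s_max}. S_class s \<epsilon> b B J0)"
  have f0U: "f0 t \<in> U" using f0S2 s2rng by (auto simp: U_def)
  note Hb = H[OF bB(1) bB(2) J0]
  define \<beta> where "\<beta> = 1 - 2 * \<alpha>"
  have \<beta>: "0 < \<beta>" "\<beta> \<le> 1" using assms by (simp_all add: \<beta>_def)
  define \<eta> where "\<eta> = \<beta> / 8"
  define \<gamma> where "\<gamma> = \<beta>\<^sup>2 / 64"
  have \<eta>: "0 < \<eta>" using \<beta> by (simp add: \<eta>_def)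
  have "\<beta>\<^sup>2 \<le> 1" using \<beta> by (simp add: power_le_one)
  then have \<gamma>: "0 < \<gamma>" "\<gamma> \<le> 1" using \<beta> by (simp_all add: \<gamma>_def)
  obtain K where K: "0 < K" and limK: "limsup (\<lambda>n. SUP F\<in>S_class s2 \<epsilon> b B J0.
             ereal (measure (Pr n F)
               {Y \<in> space (Pr n F). l2_diam (C n Y) > ereal (K * real n powr (- s2 / (2 * s2 + 1)))}))
           \<le> ereal \<eta>"
    using Hb s2rng \<eta> by blast
  have ev1: "eventually (\<lambda>n. ereal (1 - \<alpha> - \<eta>) < (INF F\<in>U. ereal (measure (Pr n F) {Y \<in> space (Pr n F). F \<in> C n Y}))) sequentially"
  proof -
    have "ereal (1 - \<alpha>) \<le> liminf (\<lambda>n. INF F\<in>U. ereal (measure (Pr n F) {Y \<in> space (Pr n F). F \<in> C n Y}))"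
      using Hb unfolding U_def by blast
    then show ?thesis unfolding le_Liminf_iff using \<eta> by auto
  qed
  have ev2: "eventually (\<lambda>n. (SUP F\<in>S_class s2 \<epsilon> b B J0.
             ereal (measure (Pr n F)
               {Y \<in> space (Pr n F). l2_diam (C n Y) > ereal (K * real n powr (- s2 / (2 * s2 + 1)))})) < ereal (\<eta> + \<eta>)) sequentially"
    by (rule Limsup_lessD, rule le_less_trans[OF limK]) (use \<eta> in simp)
  obtain N where N: "\<And>n. n \<ge> N \<Longrightarrow> ereal (1 - \<alpha> - \<eta>) < (INF F\<in>U. ereal (measure (Pr n F) {Y \<in> space (Pr n F). F \<in> C n Y}))
      \<and> (SUP F\<in>S_class s2 \<epsilon> b B J0.
             ereal (measure (Pr n F)
               {Y \<in> space (Pr n F). l2_diam (C n Y) > ereal (K * real n powr (- s2 / (2 * s2 + 1)))})) < ereal (\<eta> + \<eta>)"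
    using eventually_conj[OF ev1 ev2] unfolding eventually_sequentially by blast
  obtain q p where qN: "q \<ge> N" and p1: "p \<ge> 1" and
    c1: "K * real ((2::nat) ^ q) powr (- s2 / (2 * s2 + 1)) <
        sqrt (real (2 ^ p - 1) * 2 powr (- (real p * (2 * s1 + 1) + 2 * s1)))" and
    c2: "real (2 ^ p - 1) * (real ((2::nat) ^ q) * 2 powr (- (real p * (2 * s1 + 1) + 2 * s1)))\<^sup>2 \<le> \<gamma>"
    using asy_choice[OF s1pos s2gt K \<gamma>(1), of N] by blast
  define n where "n = (2::nat) ^ q"
  have nN: "n \<ge> N" using qN unfolding n_def
    by (meson le_trans less_imp_le_nat less_exp)
  have n1: "1 \<le> n" by (simp add: n_def)
  note Nn = N[OF nN]
  define \<sigma> where "\<sigma> = 1 / sqrt (real n)"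
  have \<sigma>: "0 < \<sigma>" using n1 by (simp add: \<sigma>_def)
  have PrPP: "\<And>F. Pr n F = PP \<sigma> F" by (simp add: Pr_PP \<sigma>_def)
  have spPr: "\<And>F. space (Pr n F) = space Ysp" by (simp add: PrPP space_PP)
  define T where "T = K * real n powr (- s2 / (2 * s2 + 1))"
  define r where "r = 2 powr (- (real p * (2 * s1 + 1) + 2 * s1))"
  define \<rho> where "\<rho> = sqrt r"
  have r0: "0 < r" by (simp add: r_def)
  have \<rho>2: "\<rho>\<^sup>2 = r" using r0 by (simp add: \<rho>_def)
  define \<Theta> where "\<Theta> = PiE (blk p) (\<lambda>_. {-1::real, 1})"
  have \<theta>prop: "\<And>i. i \<in> blk p \<Longrightarrow> \<theta> i \<in> {-1, 1}" if "\<theta> \<in> \<Theta>" for \<theta>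
    using that by (auto simp: \<Theta>_def)
  have f\<theta>U: "pert (f0 t) (blk p) \<rho> \<theta> \<in> U" if \<theta>: "\<theta> \<in> \<Theta>" for \<theta>
  proof -
    define W where "W = (\<Sum>i\<in>blk p. \<rho>\<^sup>2 * real (i + 1) powr (2 * s1))"
    have W0: "0 \<le> W" unfolding W_def by (intro sum_nonneg) auto
    have W1: "W \<le> 1" unfolding W_def \<rho>2 r_def using blk_weight[OF s1pos, of p] by simp
    have sm: "(\<lambda>i. (pert (f0 t) (blk p) \<rho> \<theta> i)\<^sup>2 * real (i + 1) powr (2 * s1)) sums (1 / (1 - 2 powr (2 * (s1 - t))) + W)"
      unfolding W_def by (rule pert_sums[OF \<theta>prop[OF \<theta>] s1t])
    have "pert (f0 t) (blk p) \<rho> \<theta> \<in> S_class s1 \<epsilon> b B J0"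
    proof (rule mem_S[OF pert_pow eps tpos s1pos sm _ _ bB(1) bB(3) sqQ])
      show "1 \<le> 1 / (1 - 2 powr (2 * (s1 - t))) + W" using N1 W0 by (simp add: N1_def)
      have "N1 + W \<le> Q" using N2 W1 by (simp add: Q_def)
      then show "1 / (1 - 2 powr (2 * (s1 - t))) + W \<le> Q" by (simp only: N1_def)
    next
      fix J assume "J0 \<le> J"
      then show "c_const s1 * Q * 2 powr (- 2 * real J * s1) \<le> 2 powr (- 2 * t * (real J * (1 - \<epsilon>) + 1))"
        by (intro Ja(2)) (simp add: J0_def)
    qed
    then show ?thesis using s1rng by (auto simp: U_def)
  qed
  have cov: "1 - \<alpha> - \<eta> < measure (PP \<sigma> F) {Y \<in> space Ysp. F \<in> C n Y}" if "F \<in> U" for F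
  proof -
    have "ereal (1 - \<alpha> - \<eta>) < (INF F\<in>U. ereal (measure (Pr n F) {Y \<in> space (Pr n F). F \<in> C n Y}))"
      using Nn by blast
    also have "\<dots> \<le> ereal (measure (Pr n F) {Y \<in> space (Pr n F). F \<in> C n Y})"
      using that by (rule INF_lower)
    finally show ?thesis by (simp add: PrPP space_PP)
  qed
  have big: "measure (PP \<sigma> (f0 t)) {Y \<in> space Ysp. ereal T < l2_diam (C n Y)} < \<eta> + \<eta>"
  proof -
    have "ereal (measure (Pr n (f0 t)) {Y \<in> space (Pr n (f0 t)). l2_diam (C n Y) > ereal (K * real n powr (- s2 / (2 * s2 + 1)))})
       \<le> (SUP F\<in>S_class s2 \<epsilon> b B J0.
             ereal (measure (Pr n F)
               {Y \<in> space (Pr n F). l2_diam (C n Y) > ereal (K * real n powr (- s2 / (2 * s2 + 1)))}))"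
      using f0S2 by (rule SUP_upper)
    also have "\<dots> < ereal (\<eta> + \<eta>)" using Nn by blast
    finally show ?thesis by (simp add: PrPP space_PP T_def)
  qed
  define Cov where "Cov F = {Y \<in> space Ysp. F \<in> C n Y}" for F
  define Big where "Big = {Y \<in> space Ysp. ereal T < l2_diam (C n Y)}"
  define E where "E = Cov (f0 t) - Big"
  have CovS: "Cov F \<in> sets Ysp" for F using Cm1 by (simp add: Cov_def)
  have BigS: "Big \<in> sets Ysp" using Cm2[where n=n and t="ereal T"] by (simp add: Big_def)
  have ES: "E \<in> sets Ysp" using CovS BigS by (simp add: E_def sets.Diff)
  have P0E: "1 - \<alpha> - \<eta> - (\<eta> + \<eta>) < measure (PP \<sigma> (f0 t)) E"
  proof -
    interpret prob_space "PP \<sigma> (f0 t)" using \<sigma> by (rule prob_space_PP)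
    have "Cov (f0 t) \<subseteq> E \<union> Big" by (auto simp: E_def)
    then have "measure (PP \<sigma> (f0 t)) (Cov (f0 t)) \<le> measure (PP \<sigma> (f0 t)) (E \<union> Big)"
      using ES BigS by (intro finite_measure_mono) (auto simp: sets_PP)
    also have "\<dots> \<le> measure (PP \<sigma> (f0 t)) E + measure (PP \<sigma> (f0 t)) Big"
      using ES BigS by (intro measure_Un_le) (auto simp: sets_PP)
    finally show ?thesis using cov[OF f0U] big by (simp add: Cov_def Big_def)
  qed
  have P\<theta>: "measure (PP \<sigma> (pert (f0 t) (blk p) \<rho> \<theta>)) E \<le> \<alpha> + \<eta>" if \<theta>: "\<theta> \<in> \<Theta>" for \<theta>
  proof -
    define g where "g = pert (f0 t) (blk p) \<rho> \<theta>"
    interpret prob_space "PP \<sigma> g" using \<sigma> by (rule prob_space_PP)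
    have disj: "E \<inter> Cov g = {}"
    proof (rule ccontr)
      assume "E \<inter> Cov g \<noteq> {}"
      then obtain Y where Y: "f0 t \<in> C n Y" "\<not> (ereal T < l2_diam (C n Y))" "g \<in> C n Y"
        by (auto simp: E_def Cov_def Big_def)
      have d1: "ereal (l2_dist (f0 t) g) \<le> l2_diam (C n Y)"
        unfolding l2_diam_def using Y(1,3) by (intro SUP_upper2[of "f0 t"] SUP_upper) auto
      have d2: "l2_dist (f0 t) g = sqrt (real (2 ^ p - 1) * r)"
        using l2_dist_pert[OF \<theta>prop[OF \<theta>] finite_blk] by (simp add: g_def card_blk \<rho>2)
      have d3: "T < sqrt (real (2 ^ p - 1) * r)" using c1 by (simp add: T_def n_def r_def)
      have "ereal T < ereal (l2_dist (f0 t) g)" using d2 d3 by simp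
      then have "ereal T < l2_diam (C n Y)" using d1 by (rule less_le_trans)
      then show False using Y(2) by simp
    qed
    have "measure (PP \<sigma> g) E + measure (PP \<sigma> g) (Cov g) = measure (PP \<sigma> g) (E \<union> Cov g)"
      using ES CovS disj by (intro finite_measure_Union[symmetric]) (auto simp: sets_PP)
    also have "\<dots> \<le> 1" by simp
    finally show ?thesis using cov[OF f\<theta>U[OF \<theta>]] by (simp add: g_def Cov_def)
  qed
  define m where "m = card (blk p)"
  have cardT: "card \<Theta> = 2 ^ m" unfolding \<Theta>_def m_def using finite_blk by (simp add: card_PiE numeral_2_eq_2)
  have sumb: "(\<Sum>\<theta>\<in>\<Theta>. measure (PP \<sigma> (pert (f0 t) (blk p) \<rho> \<theta>)) E) / 2 ^ m \<le> \<alpha> + \<eta>"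
  proof -
    have "(\<Sum>\<theta>\<in>\<Theta>. measure (PP \<sigma> (pert (f0 t) (blk p) \<rho> \<theta>)) E) \<le> (\<Sum>\<theta>\<in>\<Theta>. \<alpha> + \<eta>)"
      by (intro sum_mono P\<theta>)
    also have "\<dots> = 2 ^ m * (\<alpha> + \<eta>)" by (simp add: cardT)
    finally show ?thesis by (simp add: field_simps)
  qed
  define x where "x = \<rho>\<^sup>2 / \<sigma>\<^sup>2"
  have x_eq: "x = r * real n" using n1 by (simp add: x_def \<rho>2 \<sigma>_def power_divide)
  have chb: "((exp x + exp (- x)) / 2) ^ m \<le> 1 + 2 * \<gamma>"
  proof (rule cosh_pow_bound[OF _ _ \<gamma>(2)])
    show "0 \<le> x" using r0 by (simp add: x_eq)
    show "real m * x\<^sup>2 \<le> \<gamma>" using c2 by (simp add: m_def card_blk x_eq n_def r_def mult.commute)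
  qed
  have mb: "measure (PP \<sigma> (f0 t)) E \<le>
    (\<Sum>\<theta>\<in>\<Theta>. measure (PP \<sigma> (pert (f0 t) (blk p) \<rho> \<theta>)) E) / 2 ^ m
      + \<eta> / 2 + (((exp x + exp (- x)) / 2) ^ m - 1) / (2 * \<eta>)"
    using mixture_bound[OF \<sigma> finite_blk[of p] ES \<eta>, of "f0 t" \<rho>] unfolding \<Theta>_def m_def x_def .
  have "(((exp x + exp (- x)) / 2) ^ m - 1) / (2 * \<eta>) \<le> (2 * \<gamma>) / (2 * \<eta>)"
    using chb \<eta> by (intro divide_right_mono) auto
  also have "\<dots> = \<eta>" using \<beta> by (simp add: \<gamma>_def \<eta>_def power2_eq_square field_simps)
  finally have "measure (PP \<sigma> (f0 t)) E \<le> \<alpha> + \<eta> + \<eta> / 2 + \<eta>" using mb sumb by linarith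
  then show False using P0E \<beta> unfolding \<eta>_def \<beta>_def by (simp add: field_simps)
qed


end
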